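(* Let $n\ge1$ and $\boldsymbol x=(x_1,\dots,x_n)\in\mathbb C^n$ with pairwise distinct components. Let $\sigma_{l,d}$ (resp. $\sigma_d$) be the elementary symmetric polynomial of degree $d$ in $x_1,\dots,\widehat{x_l},\dots,x_n$ (resp. in $x_1,\dots,x_n$), with $\sigma_0=1$, and let $\tau_l=\prod_{h\neq l}(x_l-x_h)$. Let $\Sigma=(\sigma_{l,n-j})_{l,j=1}^n$, $X=\mathrm{diag}(x_l)_{l=1}^n$, $T=\mathrm{diag}(\tau_l^{-1})_{l=1}^n$. Then for every $r\in\{0,1,\dots,n\}$, $${}^t\Sigma\,X^rT\,\Sigma=\begin{pmatrix}(-1)^{n-r}A&0\\0&(-1)^{n-r+1}B\end{pmatrix},$$ where $A$ is the $r\times r$ matrix with $(k,j)$-entry $a_{k,j}=\sigma_{n+r-k-j+1}$ if $k+j\ge r+1$ and $0$ otherwise, and $B$ is the $(n-r)\times(n-r)$ matrix with $(k,j)$-entry $b_{k,j}=\sigma_{n-r-k-j+1}$ if $k+j\le n-r+1$ and $0$ otherwise.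
   Context: ${}^t\Sigma$ denotes the transpose of $\Sigma$. *)

theory Defs
  imports Complex_Main "Jordan_Normal_Form.Matrix"
begin

definition esym :: "(nat \<Rightarrow> complex) \<Rightarrow> nat set \<Rightarrow> nat \<Rightarrow> complex" where
  "esym x S d = (\<Sum>U | U \<subseteq> S \<and> card U = d. \<Prod>i\<in>U. x i)"

(* Paper indices are 1..n; JNF matrices are 0-indexed, so entry (i,j) of a
   matrix below is the paper's entry (i+1, j+1). *)

definition sigma_l :: "nat \<Rightarrow> (nat \<Rightarrow> complex) \<Rightarrow> nat \<Rightarrow> nat \<Rightarrow> complex" where
  "sigma_l n x l d = esym x ({1..n} - {l}) d"

definition sigma :: "nat \<Rightarrow> (nat \<Rightarrow> complex) \<Rightarrow> nat \<Rightarrow> complex" where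
  "sigma n x d = esym x {1..n} d"

definition tau :: "nat \<Rightarrow> (nat \<Rightarrow> complex) \<Rightarrow> nat \<Rightarrow> complex" where
  "tau n x l = (\<Prod>h\<in>{1..n} - {l}. (x l - x h))"

definition SigmaM :: "nat \<Rightarrow> (nat \<Rightarrow> complex) \<Rightarrow> complex mat" where
  "SigmaM n x = mat n n (\<lambda>(i, j). let l = i + 1; jj = j + 1 in sigma_l n x l (n - jj))"

definition XM :: "nat \<Rightarrow> (nat \<Rightarrow> complex) \<Rightarrow> complex mat" where
  "XM n x = mat n n (\<lambda>(i, j). if i = j then x (i + 1) else 0)"

definition TM :: "nat \<Rightarrow> (nat \<Rightarrow> complex) \<Rightarrow> complex mat" where
  "TM n x = mat n n (\<lambda>(i, j). if i = j then inverse (tau n x (i + 1)) else 0)"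

definition AM :: "nat \<Rightarrow> (nat \<Rightarrow> complex) \<Rightarrow> nat \<Rightarrow> complex mat" where
  "AM n x r = mat r r (\<lambda>(i, j). let k = i + 1; jj = j + 1 in
      if k + jj \<ge> r + 1 then sigma n x (n + r + 1 - k - jj) else 0)"

definition BM :: "nat \<Rightarrow> (nat \<Rightarrow> complex) \<Rightarrow> nat \<Rightarrow> complex mat" where
  "BM n x r = mat (n - r) (n - r) (\<lambda>(i, j). let k = i + 1; jj = j + 1 in
      if k + jj \<le> n - r + 1 then sigma n x (n - r + 1 - k - jj) else 0)"

end

theory Submission
  imports Defs "HOL-Computational_Algebra.Polynomial"
begin


lemma esym_0: "finite S \<Longrightarrow> esym x S 0 = 1"
proof -
  assume "finite S"
  have h: "{U. U \<subseteq> S \<and> card U = 0} = {{}}" using \<open>finite S\<close>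
    by (auto, metis card_0_eq empty_iff finite_subset)
  show ?thesis unfolding esym_def h by simp
qed

lemma esym_big: "finite S \<Longrightarrow> card S < d \<Longrightarrow> esym x S d = 0"
proof -
  assume "finite S" "card S < d"
  have h: "{U. U \<subseteq> S \<and> card U = d} = {}" using \<open>finite S\<close> \<open>card S < d\<close>
    by (auto dest: card_mono)
  show ?thesis unfolding esym_def h by simp
qed

lemma esym_insert:
  assumes "finite S" "a \<notin> S"
  shows "esym x (insert a S) (Suc d) = esym x S (Suc d) + x a * esym x S d"
proof -
  let ?A = "{U. U \<subseteq> S \<and> card U = Suc d}"
  let ?C = "{U. U \<subseteq> S \<and> card U = d}"
  have eq: "{U. U \<subseteq> insert a S \<and> card U = Suc d} = ?A \<union> insert a ` ?C"
  proof (rule equalityI; rule subsetI)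
    fix U assume U: "U \<in> {U. U \<subseteq> insert a S \<and> card U = Suc d}"
    show "U \<in> ?A \<union> insert a ` ?C"
    proof (cases "a \<in> U")
      case True
      have fU: "finite U" using U assms finite_subset by blast
      have "U = insert a (U - {a})" using True by auto
      moreover have "U - {a} \<in> ?C" using U fU True by auto
      ultimately show ?thesis by blast
    next
      case False then show ?thesis using U by auto
    qed
  next
    fix U assume "U \<in> ?A \<union> insert a ` ?C"
    then show "U \<in> {U. U \<subseteq> insert a S \<and> card U = Suc d}"
    proof
      assume "U \<in> ?A" then show ?thesis by auto
    next
      assume "U \<in> insert a ` ?C"
      then obtain V where V: "V \<in> ?C" "U = insert a V" by auto
      have "finite V" using V assms finite_subset by blast
      moreover have "a \<notin> V" using V assms by auto
      ultimately show ?thesis using V by auto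
    qed
  qed
  have fin: "finite ?A" "finite (insert a ` ?C)" using assms by auto
  have disj: "?A \<inter> insert a ` ?C = {}" using assms by auto
  have inj: "inj_on (insert a) ?C"
  proof (rule inj_onI)
    fix U V assume "U \<in> ?C" "V \<in> ?C" "insert a U = insert a V"
    moreover have "a \<notin> U" "a \<notin> V" using calculation assms by auto
    ultimately show "U = V" by (metis Diff_insert_absorb)
  qed
  have "esym x (insert a S) (Suc d) = (\<Sum>U\<in>?A. \<Prod>i\<in>U. x i) + (\<Sum>U\<in>insert a ` ?C. \<Prod>i\<in>U. x i)"
    unfolding esym_def eq by (rule sum.union_disjoint[OF fin disj])
  also have "(\<Sum>U\<in>insert a ` ?C. \<Prod>i\<in>U. x i) = (\<Sum>U\<in>?C. \<Prod>i\<in>insert a U. x i)"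
    by (subst sum.reindex[OF inj]) simp
  also have "\<dots> = (\<Sum>U\<in>?C. x a * (\<Prod>i\<in>U. x i))"
  proof (rule sum.cong[OF refl])
    fix U assume "U \<in> ?C"
    then have "finite U" "a \<notin> U" using assms finite_subset by blast+
    then show "(\<Prod>i\<in>insert a U. x i) = x a * (\<Prod>i\<in>U. x i)" by simp
  qed
  also have "\<dots> = x a * esym x S d" unfolding esym_def by (simp add: sum_distrib_left)
  finally show ?thesis unfolding esym_def by simp
qed


lemma moment:
  fixes x :: "nat \<Rightarrow> complex"
  assumes n: "n \<ge> 1" and inj: "inj_on x {1..n}" and e: "e < n"
  shows "(\<Sum>l\<in>{1..n}. x l ^ e / tau n x l) = (if e = n - 1 then 1 else 0)"
proof -
  define p where "p l = (\<Prod>h\<in>{1..n}-{l}. [:-x h, 1:])" for l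
  have poly_p: "poly (p l) t = (\<Prod>h\<in>{1..n}-{l}. t - x h)" for l t
    by (simp add: p_def poly_prod)
  have tau_nz: "tau n x l \<noteq> 0" if "l \<in> {1..n}" for l
  proof -
    have "x l - x h \<noteq> 0" if "h \<in> {1..n}-{l}" for h
      using inj_onD[OF inj, of l h] that \<open>l \<in> {1..n}\<close> by auto
    then show ?thesis unfolding tau_def by (subst prod_zero_iff) auto
  qed
  have p_at: "poly (p l) (x m) = (if m = l then tau n x l else 0)"
    if "l \<in> {1..n}" "m \<in> {1..n}" for l m
  proof (cases "m = l")
    case True then show ?thesis by (simp add: poly_p tau_def)
  next
    case False
    then have "m \<in> {1..n} - {l}" using that by auto
    then have "(\<Prod>h\<in>{1..n}-{l}. x m - x h) = 0" by (intro prod_zero) auto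
    then show ?thesis using False by (simp add: poly_p)
  qed
  have deg_p: "degree (p l) = n - 1" if "l \<in> {1..n}" for l
  proof -
    have "degree (p l) = (\<Sum>h\<in>{1..n}-{l}. degree [:-x h, 1:])"
      unfolding p_def by (rule degree_prod_eq_sum_degree) auto
    also have "\<dots> = n - 1" using that by simp
    finally show ?thesis .
  qed
  have lc_p: "coeff (p l) (n - 1) = 1" if "l \<in> {1..n}" for l
  proof -
    have "lead_coeff (p l) = 1" unfolding p_def lead_coeff_prod by simp
    then show ?thesis using deg_p[OF that] by simp
  qed
  define Q where "Q = (\<Sum>l\<in>{1..n}. smult (x l ^ e / tau n x l) (p l))"
  have Q_at: "poly Q (x m) = x m ^ e" if "m \<in> {1..n}" for m
  proof -
    have "poly Q (x m) = (\<Sum>l\<in>{1..n}. x l ^ e / tau n x l * (if m = l then tau n x l else 0))"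
      unfolding Q_def poly_sum
    proof (intro sum.cong refl)
      fix l assume "l \<in> {1..n}"
      show "poly (smult (x l ^ e / tau n x l) (p l)) (x m) = x l ^ e / tau n x l * (if m = l then tau n x l else 0)"
        using p_at[OF \<open>l \<in> {1..n}\<close> that] by simp
    qed
    also have "\<dots> = (\<Sum>l\<in>{1..n}. if l = m then x m ^ e / tau n x m * tau n x m else 0)"
      by (rule sum.cong) auto
    also have "\<dots> = x m ^ e / tau n x m * tau n x m"
      using that by simp
    also have "\<dots> = x m ^ e" using tau_nz[OF that] by simp
    finally show ?thesis .
  qed
  define R where "R = Q - monom 1 e"
  have degR: "degree R \<le> n - 1"
  proof -
    have "degree Q \<le> n - 1" unfolding Q_def
      by (intro degree_sum_le) (auto intro: order.trans[OF degree_smult_le] simp: deg_p)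
    moreover have "degree (monom (1::complex) e) \<le> n - 1" using e by (simp add: degree_monom_eq)
    ultimately show ?thesis unfolding R_def by (meson degree_diff_le)
  qed
  have "R = 0"
  proof (rule ccontr)
    assume R0: "R \<noteq> 0"
    have sub: "x ` {1..n} \<subseteq> {t. poly R t = 0}"
      using Q_at by (auto simp: R_def poly_monom)
    have "n = card (x ` {1..n})" using inj by (simp add: card_image)
    also have "\<dots> \<le> card {t. poly R t = 0}"
      by (rule card_mono[OF poly_roots_finite[OF R0] sub])
    also have "\<dots> \<le> degree R" by (rule card_poly_roots_bound[OF R0])
    finally show False using degR n by linarith
  qed
  then have QE: "Q = monom 1 e" by (simp add: R_def)
  have "coeff Q (n - 1) = (\<Sum>l\<in>{1..n}. x l ^ e / tau n x l)"
    unfolding Q_def coeff_sum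
  proof (intro sum.cong refl)
    fix l assume "l \<in> {1..n}"
    show "coeff (smult (x l ^ e / tau n x l) (p l)) (n - 1) = x l ^ e / tau n x l"
      using lc_p[OF \<open>l \<in> {1..n}\<close>] by simp
  qed
  then show ?thesis using QE by (auto simp: coeff_monom)
qed


lemma card_Sl: "l \<in> {1..n} \<Longrightarrow> card ({1..n::nat} - {l}) = n - 1"
  by simp

lemma sig_rec:
  assumes "l \<in> {1..n}"
  shows "sigma n x (Suc d) = sigma_l n x l (Suc d) + x l * sigma_l n x l d"
proof -
  have "{1..n} = insert l ({1..n} - {l})" using assms by auto
  then show ?thesis unfolding sigma_def sigma_l_def
    by (metis esym_insert finite_Diff finite_atLeastAtMost Diff_iff singletonI)
qed

lemma sig0: "sigma n x 0 = 1" "sigma_l n x l 0 = 1"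
  by (simp_all add: sigma_def sigma_l_def esym_0)

lemma sig_big: "n < d \<Longrightarrow> sigma n x d = 0"
  by (simp add: sigma_def esym_big)

lemma sigl_big: "l \<in> {1..n} \<Longrightarrow> n \<le> d \<Longrightarrow> sigma_l n x l d = 0"
  unfolding sigma_l_def by (rule esym_big) auto

lemma sigl_expand:
  assumes "l \<in> {1..n}"
  shows "sigma_l n x l d = (\<Sum>i\<le>d. (-1)^i * sigma n x (d - i) * x l ^ i)"
proof (induction d)
  case 0 then show ?case by (simp add: sig0)
next
  case (Suc d)
  have "sigma_l n x l (Suc d) = sigma n x (Suc d) - x l * sigma_l n x l d"
    using sig_rec[OF assms, of x d] by simp
  also have "\<dots> = sigma n x (Suc d) + (\<Sum>i\<le>d. (-1)^(Suc i) * sigma n x (d - i) * x l ^ (Suc i))"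
    unfolding Suc by (simp add: sum_distrib_left sum_negf algebra_simps)
  also have "\<dots> = (\<Sum>i\<le>Suc d. (-1)^i * sigma n x (Suc d - i) * x l ^ i)"
    by (subst sum.atMost_Suc_shift) simp
  finally show ?case .
qed

lemma sigl_star:
  assumes "l \<in> {1..n}"
  shows "(-1)^r * x l ^ r * sigma_l n x l d + (\<Sum>e<r. (-1)^e * sigma n x (d + r - e) * x l ^ e)
         = sigma_l n x l (d + r)"
proof (induction r arbitrary: d)
  case 0 then show ?case by simp
next
  case (Suc r)
  have IH: "(-1)^r * x l ^ r * sigma_l n x l (Suc d) + (\<Sum>e<r. (-1)^e * sigma n x (Suc d + r - e) * x l ^ e)
         = sigma_l n x l (Suc d + r)" by (rule Suc)
  have s: "sigma_l n x l (Suc d) = sigma n x (Suc d) - x l * sigma_l n x l d"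
    using sig_rec[OF assms, of x d] by simp
  have "(\<Sum>e<Suc r. (-1)^e * sigma n x (d + Suc r - e) * x l ^ e)
      = (\<Sum>e<r. (-1)^e * sigma n x (Suc d + r - e) * x l ^ e) + (-1)^r * sigma n x (Suc d) * x l ^ r"
    by simp
  then show ?case using IH unfolding s by (simp add: algebra_simps)
qed


lemma lin:
  fixes x :: "nat \<Rightarrow> complex"
  assumes "finite A" "finite B"
  shows "(\<Sum>l\<in>A. (\<Sum>e\<in>B. c e * x l ^ g e) / t l) = (\<Sum>e\<in>B. c e * (\<Sum>l\<in>A. x l ^ g e / t l))"
proof -
  have "(\<Sum>l\<in>A. (\<Sum>e\<in>B. c e * x l ^ g e) / t l) = (\<Sum>l\<in>A. \<Sum>e\<in>B. c e * (x l ^ g e / t l))"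
    by (simp add: sum_divide_distrib)
  also have "\<dots> = (\<Sum>e\<in>B. \<Sum>l\<in>A. c e * (x l ^ g e / t l))" by (rule sum.swap)
  also have "\<dots> = (\<Sum>e\<in>B. c e * (\<Sum>l\<in>A. x l ^ g e / t l))" by (simp add: sum_distrib_left)
  finally show ?thesis .
qed

lemma xr_sigl_big:
  assumes "l \<in> {1..n}" "n \<le> d + r"
  shows "x l ^ r * sigma_l n x l d = (\<Sum>e<r. (- ((-1)^r * (-1)^e * sigma n x (d + r - e))) * x l ^ e)"
proof -
  have h: "(-1)^r * x l ^ r * sigma_l n x l d = - (\<Sum>e<r. (-1)^e * sigma n x (d + r - e) * x l ^ e)"
    using sigl_star[OF assms(1), of r x d] sigl_big[OF assms] by (simp add: eq_neg_iff_add_eq_0)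
  have "x l ^ r * sigma_l n x l d = (-1)^r * ((-1)^r * x l ^ r * sigma_l n x l d)"
    by (simp add: mult.assoc[symmetric] power_mult_distrib[symmetric])
  also have "\<dots> = (\<Sum>e<r. (- ((-1)^r * (-1)^e * sigma n x (d + r - e))) * x l ^ e)"
    unfolding h by (simp add: sum_distrib_left sum_negf mult.assoc)
  finally show ?thesis .
qed

lemma xr_sigl_small:
  assumes "l \<in> {1..n}"
  shows "x l ^ r * sigma_l n x l d = (\<Sum>i\<le>d. ((-1)^i * sigma n x (d - i)) * x l ^ (i + r))"
  unfolding sigl_expand[OF assms] by (simp add: sum_distrib_left power_add algebra_simps)

lemma dual:
  fixes x :: "nat \<Rightarrow> complex"
  assumes n: "n \<ge> 1" and inj: "inj_on x {1..n}" and i: "i < n" and m: "m < n"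
  shows "(\<Sum>l\<in>{1..n}. x l ^ i * sigma_l n x l m / tau n x l) = (if i + m = n - 1 then (-1)^m else 0)"
proof (cases "n \<le> m + i")
  case True
  have "(\<Sum>l\<in>{1..n}. x l ^ i * sigma_l n x l m / tau n x l)
      = (\<Sum>l\<in>{1..n}. (\<Sum>e<i. (- ((-1)^i * (-1)^e * sigma n x (m + i - e))) * x l ^ e) / tau n x l)"
    by (intro sum.cong refl, subst xr_sigl_big[OF _ True]) auto
  also have "\<dots> = (\<Sum>e<i. (- ((-1)^i * (-1)^e * sigma n x (m + i - e))) * (\<Sum>l\<in>{1..n}. x l ^ e / tau n x l))"
    by (rule lin) auto
  also have "\<dots> = 0"
    by (intro sum.neutral ballI, subst moment[OF n inj]) (use i in auto)
  finally show ?thesis using True n by simp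
next
  case False
  have "(\<Sum>l\<in>{1..n}. x l ^ i * sigma_l n x l m / tau n x l)
      = (\<Sum>l\<in>{1..n}. (\<Sum>a\<le>m. ((-1)^a * sigma n x (m - a)) * x l ^ (a + i)) / tau n x l)"
    by (intro sum.cong refl, subst xr_sigl_small) auto
  also have "\<dots> = (\<Sum>a\<le>m. ((-1)^a * sigma n x (m - a)) * (\<Sum>l\<in>{1..n}. x l ^ (a + i) / tau n x l))"
    by (rule lin) auto
  also have "\<dots> = (\<Sum>a\<le>m. if a = n - 1 - i then (-1)^a * sigma n x (m - a) else 0)"
    by (intro sum.cong refl, subst moment[OF n inj]) (use False in auto)
  also have "\<dots> = (if i + m = n - 1 then (-1)^m else 0)"
  proof (cases "i + m = n - 1")
    case True
    then have "n - 1 - i = m" by arith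
    then show ?thesis using True by (simp add: sig0)
  next
    case F: False
    then have "\<not> n - 1 - i \<le> m" using False i by arith
    then show ?thesis using F by simp
  qed
  finally show ?thesis .
qed


lemma lin2:
  fixes x :: "nat \<Rightarrow> complex"
  assumes "finite A" "finite B"
  shows "(\<Sum>l\<in>A. (\<Sum>e\<in>B. c e * x l ^ g e) * w l) = (\<Sum>e\<in>B. c e * (\<Sum>l\<in>A. x l ^ g e * w l))"
proof -
  have "(\<Sum>l\<in>A. (\<Sum>e\<in>B. c e * x l ^ g e) * w l) = (\<Sum>l\<in>A. \<Sum>e\<in>B. c e * (x l ^ g e * w l))"
    by (simp add: sum_distrib_right mult.assoc)
  also have "\<dots> = (\<Sum>e\<in>B. \<Sum>l\<in>A. c e * (x l ^ g e * w l))" by (rule sum.swap)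
  also have "\<dots> = (\<Sum>e\<in>B. c e * (\<Sum>l\<in>A. x l ^ g e * w l))" by (simp add: sum_distrib_left)
  finally show ?thesis .
qed

lemma neg1_eq: "even (a + b) \<Longrightarrow> (-1::complex)^a = (-1)^b"
  by (metis even_add neg_one_even_power neg_one_odd_power)

definition ent :: "nat \<Rightarrow> (nat \<Rightarrow> complex) \<Rightarrow> nat \<Rightarrow> nat \<Rightarrow> nat \<Rightarrow> complex" where
  "ent n x r k j = (\<Sum>l\<in>{1..n}. x l ^ r * sigma_l n x l (n - 1 - k) * (sigma_l n x l (n - 1 - j) / tau n x l))"

lemma entry:
  fixes x :: "nat \<Rightarrow> complex"
  assumes n: "n \<ge> 1" and inj: "inj_on x {1..n}" and r: "r \<le> n" and k: "k < n" and j: "j < n"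
  shows "ent n x r k j = (if k < r then (if j < r then (-1)^(n-r) * (if k + j + 2 \<ge> r + 1 then sigma n x (n + r + 1 - (k+1) - (j+1)) else 0) else 0)
     else (if j < r then 0 else (-1)^(n-r+1) * (if (k-r+1)+(j-r+1) \<le> n-r+1 then sigma n x (n-r+1-(k-r+1)-(j-r+1)) else 0)))"
proof -
  have D: "(\<Sum>l\<in>{1..n}. x l ^ e * (sigma_l n x l (n - 1 - j) / tau n x l)) = (if e = j then (-1)^(n-1-j) else 0)"
    if "e < n" for e
    using dual[OF n inj that, of "n - 1 - j"] j by (auto simp: times_divide_eq_right)
  show ?thesis
  proof (cases "k < r")
    case True
    have "ent n x r k j = (\<Sum>l\<in>{1..n}. (\<Sum>e<r. (- ((-1)^r * (-1)^e * sigma n x (n - 1 - k + r - e))) * x l ^ e) * (sigma_l n x l (n - 1 - j) / tau n x l))"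
      unfolding ent_def by (intro sum.cong refl, subst xr_sigl_big[symmetric]) (use True k in auto)
    also have "\<dots> = (\<Sum>e<r. (- ((-1)^r * (-1)^e * sigma n x (n - 1 - k + r - e))) * (\<Sum>l\<in>{1..n}. x l ^ e * (sigma_l n x l (n - 1 - j) / tau n x l)))"
      by (rule lin2) auto
    also have "\<dots> = (\<Sum>e<r. if e = j then (- ((-1)^r * (-1)^j * sigma n x (n - 1 - k + r - j))) * (-1)^(n-1-j) else 0)"
      by (intro sum.cong refl, subst D) (use r in auto)
    also have "\<dots> = (if j < r then (- ((-1)^r * (-1)^j * sigma n x (n - 1 - k + r - j))) * (-1)^(n-1-j) else 0)"
      by simp
    also have "\<dots> = (if j < r then (-1)^(n-r) * (if k + j + 2 \<ge> r + 1 then sigma n x (n + r + 1 - (k+1) - (j+1)) else 0) else 0)"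
    proof (cases "j < r")
      case jr: True
      have sg: "- ((-1)^r * (-1)^j * (-1::complex)^(n-1-j)) = (-1)^(n-r)"
      proof -
        have "- ((-1)^r * (-1)^j * (-1::complex)^(n-1-j)) = (-1)^(Suc (r + j + (n - 1 - j)))"
          by (simp add: power_add)
        also have "\<dots> = (-1)^(n-r)"
        proof (rule neg1_eq)
          have "Suc (r + j + (n - 1 - j)) + (n - r) = 2 * n" using jr r j by arith
          then show "even (Suc (r + j + (n - 1 - j)) + (n - r))" by simp
        qed
        finally show ?thesis .
      qed
      have arg: "n - 1 - k + r - j = n + r + 1 - (k+1) - (j+1)" using k j by arith
      show ?thesis
      proof (cases "k + j + 2 \<ge> r + 1")
        case True
        have "(- ((-1)^r * (-1)^j * sigma n x (n-1-k+r-j))) * (-1)^(n-1-j) = (- ((-1)^r * (-1)^j * (-1::complex)^(n-1-j))) * sigma n x (n-1-k+r-j)"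
          by (simp add: mult_ac)
        also have "\<dots> = (-1)^(n-r) * sigma n x (n + r + 1 - (k+1) - (j+1))" unfolding sg arg ..
        finally have eq: "(- ((-1)^r * (-1)^j * sigma n x (n-1-k+r-j))) * (-1)^(n-1-j) = (-1)^(n-r) * sigma n x (n + r + 1 - (k+1) - (j+1))" .
        show ?thesis using jr True by (simp only: eq if_True if_False not_less[symmetric]) simp
      next
        case False
        then have "n < n - 1 - k + r - j" using k j by arith
        then show ?thesis using jr False by (simp add: sig_big)
      qed
    next
      case False then show ?thesis by simp
    qed
    finally show ?thesis using True by simp
  next
    case False
    have "ent n x r k j = (\<Sum>l\<in>{1..n}. (\<Sum>i\<le>n - 1 - k. ((-1)^i * sigma n x (n - 1 - k - i)) * x l ^ (i + r)) * (sigma_l n x l (n - 1 - j) / tau n x l))"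
      unfolding ent_def by (intro sum.cong refl, subst xr_sigl_small[symmetric]) auto
    also have "\<dots> = (\<Sum>i\<le>n - 1 - k. ((-1)^i * sigma n x (n - 1 - k - i)) * (\<Sum>l\<in>{1..n}. x l ^ (i + r) * (sigma_l n x l (n - 1 - j) / tau n x l)))"
      by (rule lin2) auto
    also have "\<dots> = (\<Sum>i\<le>n - 1 - k. if i = j - r \<and> r \<le> j then ((-1)^i * sigma n x (n - 1 - k - i)) * (-1)^(n-1-j) else 0)"
      by (intro sum.cong refl, subst D) (use False k in auto)
    also have "\<dots> = (if r \<le> j \<and> j - r \<le> n - 1 - k then ((-1)^(j-r) * sigma n x (n - 1 - k - (j - r))) * (-1)^(n-1-j) else 0)"
      by (cases "r \<le> j") auto
    also have "\<dots> = (if j < r then 0 else (-1)^(n-r+1) * (if (k-r+1)+(j-r+1) \<le> n-r+1 then sigma n x (n-r+1-(k-r+1)-(j-r+1)) else 0))"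
    proof (cases "j < r")
      case True then show ?thesis by simp
    next
      case jr: False
      have sg: "(-1)^(j-r) * (-1::complex)^(n-1-j) = (-1)^(n-r+1)"
      proof -
        have "(-1)^(j-r) * (-1::complex)^(n-1-j) = (-1)^(j - r + (n - 1 - j))"
          by (simp add: power_add)
        also have "\<dots> = (-1)^(n-r+1)"
        proof (rule neg1_eq)
          have "j - r + (n - 1 - j) + (n - r + 1) = 2 * (n - r)" using jr False j by arith
          then show "even (j - r + (n - 1 - j) + (n - r + 1))" by simp
        qed
        finally show ?thesis .
      qed
      have c: "(j - r \<le> n - 1 - k) = ((k-r+1)+(j-r+1) \<le> n-r+1)" using jr False k j by arith
      have arg: "n - 1 - k - (j - r) = n-r+1-(k-r+1)-(j-r+1)" using jr False k j by arith
      have "((-1)^(j-r) * sigma n x (n - 1 - k - (j - r))) * (-1)^(n-1-j) = ((-1)^(j-r) * (-1::complex)^(n-1-j)) * sigma n x (n - 1 - k - (j - r))"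
        by (simp add: mult_ac)
      also have "\<dots> = (-1)^(n-r+1) * sigma n x (n-r+1-(k-r+1)-(j-r+1))" unfolding sg arg ..
      finally have eq: "((-1)^(j-r) * sigma n x (n - 1 - k - (j - r))) * (-1)^(n-1-j) = (-1)^(n-r+1) * sigma n x (n-r+1-(k-r+1)-(j-r+1))" .
      show ?thesis using jr c by (simp only: eq) simp
    qed
    finally show ?thesis using False by simp
  qed
qed


definition dg :: "nat \<Rightarrow> (nat \<Rightarrow> complex) \<Rightarrow> complex mat" where
  "dg n f = mat n n (\<lambda>(i,j). if i = j then f i else 0)"

lemma dg_carrier[simp]: "dg n f \<in> carrier_mat n n" by (simp add: dg_def)

lemma mult_dg:
  assumes "M \<in> carrier_mat m n"
  shows "M * dg n f = mat m n (\<lambda>(i,j). M $$ (i,j) * f j)"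
proof (rule eq_matI)
  fix i j assume ij: "i < dim_row (mat m n (\<lambda>(i,j). M $$ (i,j) * f j))" "j < dim_col (mat m n (\<lambda>(i,j). M $$ (i,j) * f j))"
  then have i: "i < m" and j: "j < n" by auto
  have "(M * dg n f) $$ (i,j) = (\<Sum>t\<in>{0..<n}. M $$ (i,t) * (if t = j then f t else 0))"
    using assms i j by (simp add: scalar_prod_def dg_def)
  also have "\<dots> = (\<Sum>t\<in>{0..<n}. if t = j then M $$ (i,j) * f j else 0)"
    by (rule sum.cong) auto
  also have "\<dots> = M $$ (i,j) * f j" using j by simp
  finally show "(M * dg n f) $$ (i,j) = mat m n (\<lambda>(i,j). M $$ (i,j) * f j) $$ (i,j)" using i j by simp
qed (use assms in \<open>auto simp: dg_def\<close>)

lemma XM_pow: "XM n x ^\<^sub>m r = dg n (\<lambda>i. x (i+1) ^ r)"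
proof (induction r)
  case 0
  show ?case by (rule eq_matI) (auto simp: XM_def dg_def)
next
  case (Suc r)
  have XMd: "XM n x = dg n (\<lambda>i. x (i+1))" unfolding XM_def dg_def by (rule refl)
  have "XM n x ^\<^sub>m Suc r = dg n (\<lambda>i. x (i+1) ^ r) * dg n (\<lambda>i. x (i+1))"
    by (subst pow_mat.simps, subst Suc, subst XMd, rule refl)
  also have "\<dots> = dg n (\<lambda>i. x (i+1) ^ Suc r)"
    by (subst mult_dg) (auto simp: dg_def intro!: eq_matI)
  finally show ?case .
qed

lemma TM_dg: "TM n x = dg n (\<lambda>i. inverse (tau n x (i+1)))"
  unfolding TM_def dg_def by (rule refl)

lemma LHS_entry:
  assumes k: "k < n" and j: "j < n"
  shows "(transpose_mat (SigmaM n x) * (XM n x ^\<^sub>m r) * TM n x * SigmaM n x) $$ (k,j) = ent n x r k j"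
proof -
  have S: "SigmaM n x \<in> carrier_mat n n" by (simp add: SigmaM_def)
  have Sd[simp]: "dim_row (SigmaM n x) = n" "dim_col (SigmaM n x) = n" by (simp_all add: SigmaM_def)
  have "transpose_mat (SigmaM n x) * (XM n x ^\<^sub>m r) * TM n x
      = mat n n (\<lambda>(i,j). SigmaM n x $$ (j,i) * x (j+1) ^ r * inverse (tau n x (j+1)))"
  proof -
    have A: "transpose_mat (SigmaM n x) * dg n (\<lambda>i. x (i+1) ^ r) = mat n n (\<lambda>(i,j). SigmaM n x $$ (j,i) * x (j+1) ^ r)"
      by (subst mult_dg) (auto simp: S intro!: eq_matI)
    have B: "mat n n (\<lambda>(i,j). SigmaM n x $$ (j,i) * x (j+1) ^ r) * dg n (\<lambda>i. inverse (tau n x (i+1)))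
       = mat n n (\<lambda>(i,j). SigmaM n x $$ (j,i) * x (j+1) ^ r * inverse (tau n x (j+1)))"
      by (subst mult_dg) (auto intro!: eq_matI)
    show ?thesis unfolding XM_pow TM_dg A B ..
  qed
  then have "(transpose_mat (SigmaM n x) * (XM n x ^\<^sub>m r) * TM n x * SigmaM n x) $$ (k,j)
     = (\<Sum>t\<in>{0..<n}. SigmaM n x $$ (t,k) * x (t+1) ^ r * inverse (tau n x (t+1)) * SigmaM n x $$ (t,j))"
    using k j S by (simp add: scalar_prod_def)
  also have "\<dots> = (\<Sum>t<n. x (Suc t) ^ r * sigma_l n x (Suc t) (n - 1 - k) * (sigma_l n x (Suc t) (n - 1 - j) / tau n x (Suc t)))"
    using k j by (intro sum.cong) (auto simp: SigmaM_def divide_inverse mult_ac)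
  also have "\<dots> = ent n x r k j"
    unfolding ent_def by (simp add: sum.atLeast1_atMost_eq)
  finally show ?thesis .
qed

theorem lemma7p3:
  fixes n r :: nat and x :: "nat \<Rightarrow> complex"
  assumes "n \<ge> 1"
    and "inj_on x {1..n}"
    and "r \<le> n"
  shows "transpose_mat (SigmaM n x) * (XM n x ^\<^sub>m r) * TM n x * SigmaM n x =
    four_block_mat (((-1) ^ (n - r)) \<cdot>\<^sub>m AM n x r) (0\<^sub>m r (n - r))
                   (0\<^sub>m (n - r) r) (((-1) ^ (n - r + 1)) \<cdot>\<^sub>m BM n x r)"
proof (rule eq_matI)
  fix i j
  assume "i < dim_row (four_block_mat (((-1) ^ (n - r)) \<cdot>\<^sub>m AM n x r) (0\<^sub>m r (n - r))
                   (0\<^sub>m (n - r) r) (((-1) ^ (n - r + 1)) \<cdot>\<^sub>m BM n x r))"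
     "j < dim_col (four_block_mat (((-1) ^ (n - r)) \<cdot>\<^sub>m AM n x r) (0\<^sub>m r (n - r))
                   (0\<^sub>m (n - r) r) (((-1) ^ (n - r + 1)) \<cdot>\<^sub>m BM n x r))"
  then have i: "i < n" and j: "j < n" using assms by (auto simp: AM_def BM_def)
  show "(transpose_mat (SigmaM n x) * (XM n x ^\<^sub>m r) * TM n x * SigmaM n x) $$ (i,j) =
    four_block_mat (((-1) ^ (n - r)) \<cdot>\<^sub>m AM n x r) (0\<^sub>m r (n - r))
                   (0\<^sub>m (n - r) r) (((-1) ^ (n - r + 1)) \<cdot>\<^sub>m BM n x r) $$ (i,j)"
    unfolding LHS_entry[OF i j] entry[OF assms i j]
    using i j assms by (auto simp: AM_def BM_def Let_def)
qed (use assms in \<open>auto simp: SigmaM_def AM_def BM_def\<close>)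

end
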